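(* Consider a single-parameter setting with $n$ agents, single-dimensional signals, and a downward-closed feasibility family $\mathcal{I}\subseteq 2^{[n]}$, in which every valuation $v_i$ is $d$-SOS ($d\ge1$). Then the Random Sampling Vickrey (RS-V) mechanism is universally ex-post IC-IR, and for every true signal profile $\mathbf{s}$ (with truthful reports) its expected welfare is at least $\frac{1}{2(d+1)}\max_{S\in\mathcal{I}}\sum_{i\in S}v_i(\mathbf{s})$. In particular, for SOS valuations ($d=1$) it is a $4$-approximation to the optimal social welfare.
   Context: Model: agents $1,\dots,n$; agent $j$ has a private signal $s_j\in\mathbb{R}_{\ge0}$; the value of agent $j$ for being served is $v_j(\mathbf{s})\ge0$, a publicly known function of the full profile $\mathbf{s}=(s_1,\dots,s_n)$, weakly increasing in every coordinate and strictly increasing in $s_j$. $\mathcal{I}$ is downward closed (subsets of feasible sets are feasible). A deterministic mechanism maps reported signals to a served set in $\mathcal{I}$ (indicators $x_i\in\{0,1\}$) and payments $p_i$; agent $i$ with true signal $s_i$ reporting $s_i'$ while others report truthfully $\mathbf{s}_{-i}$ gets utility $x_i(s_i',\mathbf{s}_{-i})v_i(s_i,\mathbf{s}_{-i})-p_i(s_i',\mathbf{s}_{-i})$. Ex-post IC: for every true profile, truthful reporting maximizes this utility; ex-post IR: truthful utility is nonnegative. A randomized mechanism is a distribution over deterministic ones; it is universally ex-post IC-IR if every deterministic mechanism in its support is. A deterministic allocation rule is monotone if for all $i,\mathbf{s}_{-i}$ and $s_i\le s_i'$, $x_i(s_i,\mathbf{s}_{-i})=1$ implies $x_i(s_i',\mathbf{s}_{-i})=1$;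 by a known characterization, a deterministic allocation rule admits payments making it ex-post IC-IR iff it is monotone, and the mechanism uses such payments. RS-V: elicit reports $\tilde{\mathbf{s}}$; partition agents into $A,B$ uniformly at random (each agent independently in each part w.p. 1/2); for $i\in B$ let $w_i=v_i(\tilde{\mathbf{s}}_A,\tilde s_i,\mathbf{0}_{B\setminus\{i\}})$; serve a set in $\arg\max_{S\in\mathcal{I},S\subseteq B}\sum_{i\in S}w_i$ (ties broken by a fixed rule); agents in $A$ are never served. $d$-SOS: for every coordinate $j$, $s_j\ge 0$, $\delta\ge0$, and $\mathbf{s}'_{-j}\le\mathbf{s}_{-j}$ coordinate-wise, $d\big(v(\mathbf{s}'_{-j},s_j+\delta)-v(\mathbf{s}'_{-j},s_j)\big)\ge v(\mathbf{s}_{-j},s_j+\delta)-v(\mathbf{s}_{-j},s_j)$; SOS means $d=1$. *)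

theory Defs
  imports Complex_Main
begin

definition nonneg_profile :: "('a \<Rightarrow> real) \<Rightarrow> bool" where
  "nonneg_profile s \<longleftrightarrow> (\<forall>k. 0 \<le> s k)"

definition valid_valuations :: "('a \<Rightarrow> ('a \<Rightarrow> real) \<Rightarrow> real) \<Rightarrow> bool" where
  "valid_valuations v \<longleftrightarrow>
     (\<forall>i s. nonneg_profile s \<longrightarrow> 0 \<le> v i s) \<and>
     (\<forall>i s t. nonneg_profile s \<longrightarrow> (\<forall>k. s k \<le> t k) \<longrightarrow> v i s \<le> v i t) \<and>
     (\<forall>i s a. nonneg_profile s \<longrightarrow> s i < a \<longrightarrow> v i s < v i (s(i := a)))"

definition downward_closed :: "'a set set \<Rightarrow> bool" where
  "downward_closed I \<longleftrightarrow> {} \<in> I \<and> (\<forall>S T. S \<in> I \<longrightarrow> T \<subseteq> S \<longrightarrow> T \<in> I)"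

definition d_SOS :: "real \<Rightarrow> (('a \<Rightarrow> real) \<Rightarrow> real) \<Rightarrow> bool" where
  "d_SOS d f \<longleftrightarrow>
     (\<forall>j s s' \<delta>. nonneg_profile s \<longrightarrow> 0 \<le> \<delta> \<longrightarrow>
        (\<forall>k. k \<noteq> j \<longrightarrow> 0 \<le> s' k \<and> s' k \<le> s k) \<longrightarrow>
        d * (f (s'(j := s j + \<delta>)) - f (s'(j := s j)))
          \<ge> f (s(j := s j + \<delta>)) - f (s(j := s j)))"

definition tie_rule :: "('a set set \<Rightarrow> 'a set) \<Rightarrow> bool" where
  "tie_rule tb \<longleftrightarrow> (\<forall>X. X \<noteq> {} \<longrightarrow> tb X \<in> X)"

definition rsv_weight ::
  "('a \<Rightarrow> ('a \<Rightarrow> real) \<Rightarrow> real) \<Rightarrow> 'a set \<Rightarrow> ('a \<Rightarrow> real) \<Rightarrow> 'a \<Rightarrow> real" where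
  "rsv_weight v A s i = v i (\<lambda>k. if k \<in> A \<or> k = i then s k else 0)"

definition rsv_argmax ::
  "('a \<Rightarrow> ('a \<Rightarrow> real) \<Rightarrow> real) \<Rightarrow> 'a set set \<Rightarrow> 'a set \<Rightarrow> ('a \<Rightarrow> real) \<Rightarrow> 'a set set" where
  "rsv_argmax v I A s =
     {S \<in> I. S \<subseteq> - A \<and>
        (\<forall>T \<in> I. T \<subseteq> - A \<longrightarrow> sum (rsv_weight v A s) T \<le> sum (rsv_weight v A s) S)}"

text \<open>The deterministic RS-V mechanism for a fixed realisation A of the random part A:
  the set of served agents at reported profile s.\<close>
definition rsv_alloc ::
  "('a \<Rightarrow> ('a \<Rightarrow> real) \<Rightarrow> real) \<Rightarrow> 'a set set \<Rightarrow> ('a set set \<Rightarrow> 'a set) \<Rightarrow> 'a set \<Rightarrow> ('a \<Rightarrow> real) \<Rightarrow> 'a set" where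
  "rsv_alloc v I tb A s = tb (rsv_argmax v I A s)"

definition ex_post_IC_IR ::
  "('a \<Rightarrow> ('a \<Rightarrow> real) \<Rightarrow> real) \<Rightarrow> (('a \<Rightarrow> real) \<Rightarrow> 'a set) \<Rightarrow> ('a \<Rightarrow> ('a \<Rightarrow> real) \<Rightarrow> real) \<Rightarrow> bool" where
  "ex_post_IC_IR v x p \<longleftrightarrow>
     (\<forall>s i t. nonneg_profile s \<longrightarrow> 0 \<le> t \<longrightarrow>
        (if i \<in> x s then v i s else 0) - p i s
          \<ge> (if i \<in> x (s(i := t)) then v i s else 0) - p i (s(i := t))) \<and>
     (\<forall>s i. nonneg_profile s \<longrightarrow> (if i \<in> x s then v i s else 0) - p i s \<ge> 0)"

definition rsv_expected_welfare ::
  "('a::finite \<Rightarrow> ('a \<Rightarrow> real) \<Rightarrow> real) \<Rightarrow> 'a set set \<Rightarrow> ('a set set \<Rightarrow> 'a set) \<Rightarrow> ('a \<Rightarrow> real) \<Rightarrow> real" where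
  "rsv_expected_welfare v I tb s =
     (\<Sum>A \<in> Pow (UNIV :: 'a set). \<Sum>i \<in> rsv_alloc v I tb A s. v i s) / 2 ^ card (UNIV :: 'a set)"

definition opt_welfare ::
  "('a \<Rightarrow> ('a \<Rightarrow> real) \<Rightarrow> real) \<Rightarrow> 'a set set \<Rightarrow> ('a \<Rightarrow> real) \<Rightarrow> real" where
  "opt_welfare v I s = Max ((\<lambda>S. \<Sum>i \<in> S. v i s) ` I)"

end

theory Submission
  imports Defs
begin


lemma argmax_ne:
  fixes v :: "'a::finite \<Rightarrow> ('a \<Rightarrow> real) \<Rightarrow> real"
  assumes "downward_closed I"
  shows "rsv_argmax v I A s \<noteq> {}"
proof -
  let ?F = "{S \<in> I. S \<subseteq> - A}"
  let ?w = "rsv_weight v A s"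
  have fin: "finite ?F" by simp
  have ne: "{} \<in> ?F" using assms by (simp add: downward_closed_def)
  hence "?F \<noteq> {}" by blast
  have "Max (sum ?w ` ?F) \<in> sum ?w ` ?F" using fin ne by (intro Max_in) auto
  then obtain S where S: "S \<in> ?F" "sum ?w S = Max (sum ?w ` ?F)" by auto
  have "\<forall>T\<in>I. T \<subseteq> - A \<longrightarrow> sum ?w T \<le> sum ?w S"
    using S fin by (auto intro: Max_ge)
  hence "S \<in> rsv_argmax v I A s" using S unfolding rsv_argmax_def by auto
  thus ?thesis by blast
qed

lemma alloc_in:
  fixes v :: "'a::finite \<Rightarrow> ('a \<Rightarrow> real) \<Rightarrow> real"
  assumes "downward_closed I" "tie_rule tb"
  shows "rsv_alloc v I tb A s \<in> rsv_argmax v I A s"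
  using argmax_ne[OF assms(1)] assms(2) unfolding tie_rule_def rsv_alloc_def by blast

lemma alloc_mono:
  fixes v :: "'a::finite \<Rightarrow> ('a \<Rightarrow> real) \<Rightarrow> real"
  assumes vv: "valid_valuations v" and dc: "downward_closed I" and tr: "tie_rule tb"
    and s: "nonneg_profile s" and i: "i \<in> rsv_alloc v I tb A s" and t: "s i \<le> t"
  shows "i \<in> rsv_alloc v I tb A (s(i := t))"
proof (cases "t = s i")
  case True thus ?thesis using i by simp
next
  case False
  hence lt: "s i < t" using t by simp
  let ?w = "rsv_weight v A s"
  let ?w' = "rsv_weight v A (s(i := t))"
  define S0 where "S0 = rsv_alloc v I tb A s"
  have S0: "S0 \<in> rsv_argmax v I A s" using alloc_in[OF dc tr] S0_def by blast
  have iS0: "i \<in> S0" using i S0_def by simp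
  have iA: "i \<notin> A" using S0 iS0 unfolding rsv_argmax_def by auto
  have eq: "?w' j = ?w j" if "j \<noteq> i" for j
  proof -
    have "(\<lambda>k. if k \<in> A \<or> k = j then (s(i := t)) k else 0) = (\<lambda>k. if k \<in> A \<or> k = j then s k else 0)"
      using iA that by (auto simp: fun_eq_iff)
    thus ?thesis by (simp add: rsv_weight_def)
  qed
  have gt: "?w' i > ?w i"
  proof -
    let ?b = "\<lambda>k. if k \<in> A \<or> k = i then s k else 0"
    have nb: "nonneg_profile ?b" using s by (auto simp: nonneg_profile_def)
    have "v i ?b < v i (?b(i := t))" using vv nb lt unfolding valid_valuations_def by auto
    moreover have "?b(i := t) = (\<lambda>k. if k \<in> A \<or> k = i then (s(i := t)) k else 0)"
      by (auto simp: fun_eq_iff)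
    ultimately show ?thesis by (simp add: rsv_weight_def)
  qed
  have sum_notin: "sum ?w' S = sum ?w S" if "i \<notin> S" for S
    using that eq by (intro sum.cong) (auto, metis)
  have sum_in: "sum ?w' S = sum ?w S + (?w' i - ?w i)" if "i \<in> S" for S :: "'a set"
  proof -
    have "sum ?w' S = ?w' i + sum ?w' (S - {i})" using that by (simp add: sum.remove)
    moreover have "sum ?w S = ?w i + sum ?w (S - {i})" using that by (simp add: sum.remove)
    moreover have "sum ?w' (S - {i}) = sum ?w (S - {i})" using sum_notin[of "S - {i}"] by simp
    ultimately show ?thesis by simp
  qed
  define S1 where "S1 = rsv_alloc v I tb A (s(i := t))"
  have S1: "S1 \<in> rsv_argmax v I A (s(i := t))" using alloc_in[OF dc tr] S1_def by blast
  show ?thesis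
  proof (rule ccontr)
    assume "i \<notin> rsv_alloc v I tb A (s(i := t))"
    hence n: "i \<notin> S1" using S1_def by simp
    have "sum ?w' S1 = sum ?w S1" using sum_notin[OF n] .
    also have "\<dots> \<le> sum ?w S0" using S0 S1 unfolding rsv_argmax_def by auto
    also have "\<dots> < sum ?w' S0" using sum_in[OF iS0] gt by simp
    also have "\<dots> \<le> sum ?w' S1" using S0 S1 unfolding rsv_argmax_def by auto
    finally show False by simp
  qed
qed

lemma part1:
  fixes v :: "'a::finite \<Rightarrow> ('a \<Rightarrow> real) \<Rightarrow> real"
  assumes vv: "valid_valuations v" and dc: "downward_closed I" and tr: "tie_rule tb"
  shows "\<exists>p. ex_post_IC_IR v (rsv_alloc v I tb A) p"
proof -
  define x where "x = rsv_alloc v I tb A"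
  define Th where "Th s i = Inf {t. 0 \<le> t \<and> i \<in> x (s(i := t))}" for s :: "'a \<Rightarrow> real" and i
  define p where "p i s = (if i \<in> x s then v i (s(i := Th s i)) else 0)" for i s
  have M: "i \<in> x (s(i := t))" if "nonneg_profile s" "0 \<le> u" "i \<in> x (s(i := u))" "u \<le> t" for s i u t
  proof -
    have "nonneg_profile (s(i := u))" using that by (auto simp: nonneg_profile_def)
    from alloc_mono[OF vv dc tr this, of i A t] that show ?thesis by (simp add: x_def)
  qed
  have Thupd: "Th (s(i := t)) i = Th s i" for s i t by (simp add: Th_def)
  have pupd: "p i (s(i := t)) = (if i \<in> x (s(i := t)) then v i (s(i := Th s i)) else 0)" for s i t
    by (simp add: p_def Thupd)
  have IR: "(if i \<in> x s then v i s else 0) - p i s \<ge> 0" if s: "nonneg_profile s" for s i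
  proof (cases "i \<in> x s")
    case True
    let ?T = "{t. 0 \<le> t \<and> i \<in> x (s(i := t))}"
    have mem: "s i \<in> ?T" using True s by (simp add: nonneg_profile_def)
    have bdd: "bdd_below ?T" by (rule bdd_belowI[of _ 0]) auto
    have le: "Th s i \<le> s i" unfolding Th_def using mem bdd by (rule cInf_lower)
    have ge: "0 \<le> Th s i" unfolding Th_def using mem by (intro cInf_greatest) auto
    have "nonneg_profile (s(i := Th s i))" using s ge by (auto simp: nonneg_profile_def)
    hence "v i (s(i := Th s i)) \<le> v i s" using vv le unfolding valid_valuations_def by auto
    thus ?thesis using True by (simp add: p_def)
  qed (simp add: p_def)
  have IC: "(if i \<in> x s then v i s else 0) - p i s
          \<ge> (if i \<in> x (s(i := t)) then v i s else 0) - p i (s(i := t))"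
    if s: "nonneg_profile s" and t: "0 \<le> t" for s i t
  proof (cases "i \<in> x (s(i := t))")
    case False
    thus ?thesis using IR[OF s, of i] pupd[of i s t] by simp
  next
    case True
    show ?thesis
    proof (cases "i \<in> x s")
      case True2: True
      thus ?thesis using True pupd[of i s t] by (simp add: p_def)
    next
      case False
      let ?T = "{t. 0 \<le> t \<and> i \<in> x (s(i := t))}"
      have mem: "t \<in> ?T" using True t by simp
      have "s i \<le> u" if "u \<in> ?T" for u
      proof (rule ccontr)
        assume "\<not> s i \<le> u"
        hence "i \<in> x (s(i := s i))" using M[of s u i "s i"] that s by simp
        thus False using False by simp
      qed
      hence ge: "s i \<le> Th s i" unfolding Th_def using mem by (intro cInf_greatest) auto
      have "v i s \<le> v i (s(i := Th s i))" using vv s ge unfolding valid_valuations_def by auto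
      thus ?thesis using True False pupd[of i s t] by (simp add: p_def)
    qed
  qed
  have "ex_post_IC_IR v x p" unfolding ex_post_IC_IR_def using IC IR by blast
  thus ?thesis unfolding x_def by blast
qed



definition restr :: "('a \<Rightarrow> real) \<Rightarrow> 'a set \<Rightarrow> 'a \<Rightarrow> real" where
  "restr s X = (\<lambda>k. if k \<in> X then s k else 0)"

lemma restr_nonneg: "nonneg_profile s \<Longrightarrow> nonneg_profile (restr s X)"
  by (auto simp: nonneg_profile_def restr_def)

lemma telescope:
  assumes dsos: "d_SOS d f" and s: "nonneg_profile s" and fin: "finite C"
  shows "C \<inter> D = {} \<Longrightarrow> E \<subseteq> D \<Longrightarrow>
    f (restr s (D \<union> C)) - f (restr s D) \<le> d * (f (restr s (E \<union> C)) - f (restr s E))"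
  using fin
proof (induction C rule: finite_induct)
  case empty thus ?case by simp
next
  case (insert c C)
  have cD: "c \<notin> D" and CD: "C \<inter> D = {}" using insert.prems by auto
  have cE: "c \<notin> E" using cD insert.prems by auto
  have IH: "f (restr s (D \<union> C)) - f (restr s D) \<le> d * (f (restr s (E \<union> C)) - f (restr s E))"
    using insert.IH CD insert.prems by blast
  let ?b = "restr s (D \<union> C)" and ?s' = "restr s (E \<union> C)"
  have c0: "0 \<le> s c" using s by (simp add: nonneg_profile_def)
  have cond: "\<forall>k. k \<noteq> c \<longrightarrow> 0 \<le> ?s' k \<and> ?s' k \<le> ?b k"
    using s insert.prems by (auto simp: restr_def nonneg_profile_def)
  have "d * (f (?s'(c := ?b c + s c)) - f (?s'(c := ?b c))) \<ge> f (?b(c := ?b c + s c)) - f (?b(c := ?b c))"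
    using dsos restr_nonneg[OF s] c0 cond unfolding d_SOS_def by blast
  moreover have "?b c = 0" using cD insert.hyps by (simp add: restr_def)
  moreover have "?s'(c := s c) = restr s (E \<union> insert c C)" by (auto simp: restr_def fun_eq_iff)
  moreover have "?s'(c := 0) = ?s'" using cE insert.hyps by (auto simp: restr_def fun_eq_iff)
  moreover have "?b(c := s c) = restr s (D \<union> insert c C)" by (auto simp: restr_def fun_eq_iff)
  moreover have "?b(c := 0) = ?b" using cD insert.hyps by (auto simp: restr_def fun_eq_iff)
  ultimately have step: "f (restr s (D \<union> insert c C)) - f ?b \<le> d * (f (restr s (E \<union> insert c C)) - f ?s')"
    by simp
  show ?case using IH step by (simp add: algebra_simps)
qed

lemma key_j:
  fixes v :: "'a::finite \<Rightarrow> ('a \<Rightarrow> real) \<Rightarrow> real"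
  assumes vv: "valid_valuations v" and d: "0 \<le> d" and ds: "d_SOS d (v j)" and s: "nonneg_profile s"
  shows "v j s \<le> v j (restr s (insert j A)) + d * v j (restr s (insert j (- A)))"
proof -
  have "v j (restr s (insert j A \<union> - insert j A)) - v j (restr s (insert j A))
     \<le> d * (v j (restr s ({j} \<union> - insert j A)) - v j (restr s {j}))"
    by (rule telescope[OF ds s]) auto
  moreover have "insert j A \<union> - insert j A = UNIV" by auto
  moreover have "{j} \<union> - insert j A = insert j (- A)" by auto
  moreover have "restr s UNIV = s" by (simp add: restr_def)
  moreover have "0 \<le> v j (restr s {j})" using vv restr_nonneg[OF s] unfolding valid_valuations_def by blast
  ultimately show ?thesis using d by (simp add: algebra_simps) (smt (verit) mult_nonneg_nonneg)
qed

lemma sum_half: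
  fixes g :: "'a::finite set \<Rightarrow> real"
  assumes g: "\<And>A. g (insert j A) = g A"
  shows "2 * (\<Sum>A\<in>UNIV. if j \<notin> A then g A else 0) = (\<Sum>A\<in>UNIV. g A)"
proof -
  define fl where "fl A = (if j \<in> A then A - {j} else insert j A)" for A :: "'a set"
  have inv: "fl (fl A) = A" for A by (auto simp: fl_def)
  have gfl: "g (fl A) = g A" for A
  proof -
    have "g (fl A) = g (insert j (fl A))" using g by simp
    also have "insert j (fl A) = insert j A" by (auto simp: fl_def)
    finally show ?thesis using g by simp
  qed
  have "(\<Sum>A\<in>UNIV. if j \<notin> A then g A else 0) = (\<Sum>A\<in>UNIV. if j \<notin> fl A then g (fl A) else 0)"
    by (rule sum.reindex_bij_witness[of _ fl fl]) (auto simp: inv)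
  also have "\<dots> = (\<Sum>A\<in>UNIV. if j \<in> A then g A else 0)"
    by (rule sum.cong) (auto simp: gfl fl_def, metis g insert_Diff)
  finally have "2 * (\<Sum>A\<in>UNIV. if j \<notin> A then g A else 0)
     = (\<Sum>A\<in>UNIV. if j \<notin> A then g A else 0) + (\<Sum>A\<in>UNIV. if j \<in> A then g A else 0)" by simp
  also have "\<dots> = (\<Sum>A\<in>UNIV. g A)" by (subst sum.distrib[symmetric]) (rule sum.cong, auto)
  finally show ?thesis .
qed

lemma sum_compl:
  fixes g :: "'a::finite set \<Rightarrow> real"
  shows "(\<Sum>A\<in>UNIV. g (- A)) = (\<Sum>A\<in>UNIV. g A)"
  by (rule sum.reindex_bij_witness[of _ uminus uminus]) auto



lemma part2:
  fixes v :: "'a::finite \<Rightarrow> ('a \<Rightarrow> real) \<Rightarrow> real"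
  assumes vv: "valid_valuations v" and dc: "downward_closed I" and d1: "1 \<le> d"
    and ds: "\<forall>i. d_SOS d (v i)" and tr: "tie_rule tb" and s: "nonneg_profile s"
  shows "rsv_expected_welfare v I tb s \<ge> opt_welfare v I s / (2 * (d + 1))"
proof -
  define N :: nat where "N = card (UNIV :: 'a set)"
  define g where "g j A = v j (restr s (insert j A))" for j A
  define h where "h j A = (if j \<notin> A then g j A else 0)" for j A
  define W where "W A = (\<Sum>i \<in> rsv_alloc v I tb A s. v i s)" for A
  have fin: "finite I" by simp
  have ne: "{} \<in> I" using dc by (simp add: downward_closed_def)
  have "opt_welfare v I s \<in> (\<lambda>S. \<Sum>i \<in> S. v i s) ` I"
    unfolding opt_welfare_def using fin ne by (intro Max_in) auto
  then obtain Ss where Ss: "Ss \<in> I" and opt: "opt_welfare v I s = (\<Sum>i \<in> Ss. v i s)" by auto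
  have cardU: "card (UNIV :: 'a set set) = 2 ^ N"
    using card_Pow[of "UNIV :: 'a set"] by (simp add: N_def)
  have wg: "rsv_weight v A s j = g j A" for A j
  proof -
    have "(\<lambda>k. if k \<in> A \<or> k = j then s k else 0) = restr s (insert j A)"
      by (auto simp: restr_def fun_eq_iff)
    thus ?thesis by (simp add: rsv_weight_def g_def)
  qed
  have gle: "g j A \<le> v j s" for j A
  proof -
    have "\<forall>k. restr s (insert j A) k \<le> s k" using s by (auto simp: restr_def nonneg_profile_def)
    thus ?thesis using vv restr_nonneg[OF s] unfolding valid_valuations_def g_def by blast
  qed
  have perA: "(\<Sum>j\<in>Ss. h j A) \<le> W A" for A
  proof -
    let ?w = "rsv_weight v A s"
    have al: "rsv_alloc v I tb A s \<in> rsv_argmax v I A s" by (rule alloc_in[OF dc tr])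
    have "(\<Sum>j\<in>Ss. h j A) = (\<Sum>j\<in>Ss \<inter> - A. g j A)"
      by (simp add: h_def sum.inter_restrict)
    also have "\<dots> = sum ?w (Ss \<inter> - A)" by (simp add: wg)
    also have "\<dots> \<le> sum ?w (rsv_alloc v I tb A s)"
    proof -
      have "Ss \<inter> - A \<in> I" using dc Ss unfolding downward_closed_def by blast
      thus ?thesis using al unfolding rsv_argmax_def by auto
    qed
    also have "\<dots> \<le> W A" unfolding W_def by (rule sum_mono) (simp add: wg gle)
    finally show ?thesis .
  qed
  have perj: "2 ^ N * v j s / (2 * (d + 1)) \<le> (\<Sum>A\<in>UNIV. h j A)" for j
  proof -
    have "(\<Sum>A\<in>(UNIV::'a set set). v j s) \<le> (\<Sum>A\<in>UNIV. g j A + d * g j (- A))"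
      using key_j[OF vv _ ds[rule_format] s] d1 by (intro sum_mono) (simp add: g_def)
    also have "\<dots> = (\<Sum>A\<in>UNIV. g j A) + d * (\<Sum>A\<in>UNIV. g j (- A))"
      by (simp add: sum.distrib sum_distrib_left)
    also have "\<dots> = (d + 1) * (\<Sum>A\<in>UNIV. g j A)" by (simp add: sum_compl algebra_simps)
    also have "(\<Sum>A\<in>UNIV. g j A) = 2 * (\<Sum>A\<in>UNIV. h j A)"
      unfolding h_def by (rule sum_half[symmetric]) (simp add: g_def)
    finally have "2 ^ N * v j s \<le> (d + 1) * (2 * (\<Sum>A\<in>UNIV. h j A))" using cardU by simp
    thus ?thesis using d1 by (simp add: field_simps)
  qed
  have "2 ^ N * opt_welfare v I s / (2 * (d + 1)) = (\<Sum>j\<in>Ss. 2 ^ N * v j s / (2 * (d + 1)))"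
    by (simp add: opt sum_divide_distrib sum_distrib_left)
  also have "\<dots> \<le> (\<Sum>j\<in>Ss. \<Sum>A\<in>UNIV. h j A)" by (rule sum_mono) (rule perj)
  also have "\<dots> = (\<Sum>A\<in>UNIV. \<Sum>j\<in>Ss. h j A)" by (rule sum.swap)
  also have "\<dots> \<le> (\<Sum>A\<in>UNIV. W A)" by (rule sum_mono) (rule perA)
  finally have main: "2 ^ N * opt_welfare v I s / (2 * (d + 1)) \<le> (\<Sum>A\<in>UNIV. W A)" .
  have "rsv_expected_welfare v I tb s = (\<Sum>A\<in>UNIV. W A) / 2 ^ N"
    by (simp add: rsv_expected_welfare_def W_def N_def)
  moreover have "(2 ^ N * opt_welfare v I s / (2 * (d + 1))) / 2 ^ N \<le> (\<Sum>A\<in>UNIV. W A) / 2 ^ N"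
    using main by (intro divide_right_mono) auto
  moreover have "(2 ^ N * opt_welfare v I s / (2 * (d + 1))) / 2 ^ N = opt_welfare v I s / (2 * (d + 1))"
    by simp
  ultimately show ?thesis by simp
qed


theorem mainTheorem3:
  fixes v :: "'a::finite \<Rightarrow> ('a \<Rightarrow> real) \<Rightarrow> real"
    and I :: "'a set set"
    and tb :: "'a set set \<Rightarrow> 'a set"
    and d :: real
  assumes "valid_valuations v"
    and "downward_closed I"
    and "1 \<le> d"
    and "\<forall>i. d_SOS d (v i)"
    and "tie_rule tb"
  shows "(\<forall>A. \<exists>p. ex_post_IC_IR v (rsv_alloc v I tb A) p)
       \<and> (\<forall>s. nonneg_profile s \<longrightarrow>
            rsv_expected_welfare v I tb s \<ge> opt_welfare v I s / (2 * (d + 1)))"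
  using part1[OF assms(1,2,5)] part2[OF assms] by blast

end
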